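(* Let $k\ge 3$ and let $V$ be a finite subset of $\mathbb R$ that is optimal for $k$-term arithmetic progressions. Let $(V_1<V_2<\cdots<V_{k-1})$ be a $\le$-orderly, balanced $(k-1)$-decomposition of $V$. Then both $\bigcup_{j=1}^{k-2}V_j$ and $\bigcup_{j=2}^{k-1}V_j$ are optimal for $(k-1)$-term arithmetic progressions.
   Context: A $k$-term arithmetic progression is a set $\{a,a+d,\dots,a+(k-1)d\}\subseteq\mathbb R$ with $d>0$; $S_{\mathcal A_k}(V)$ is the number of them contained in $V$. An $m$-set $V$ is optimal for $k$-term arithmetic progressions if $S_{\mathcal A_k}(V)$ equals the maximum of $S_{\mathcal A_k}(W)$ over all $m$-subsets $W\subseteq\mathbb R$, namely $(m-r)(m+r-k+1)/(2k-2)$ with $r$ the remainder of $m$ modulo $k-1$. For $A,B\subseteq\mathbb R$, $A<B$ means $a<b$ for all $a\in A$, $b\in B$. A $\le$-orderly $\ell$-decomposition of $V$ is a family $(V_1,\dots,V_\ell)$ of pairwise disjoint, possibly empty subsets with union $V$ such that $V_1<V_2<\cdots<V_\ell$; it is balanced if each $V_i$ has $\lfloor |V|/\ell\rfloor$ or $\lceil |V|/\ell\rceil$ elements. *)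

theory Defs
  imports "HOL-Analysis.Analysis"
begin

definition arith_prog :: "nat \<Rightarrow> real \<Rightarrow> real \<Rightarrow> real set" where
  "arith_prog k a d = {a + real i * d | i. i < k}"

definition S_AP :: "nat \<Rightarrow> real set \<Rightarrow> nat" where
  "S_AP k V = card {P. \<exists>a d. d > 0 \<and> P = arith_prog k a d \<and> P \<subseteq> V}"

definition optimal_AP :: "nat \<Rightarrow> real set \<Rightarrow> bool" where
  "optimal_AP k V \<longleftrightarrow> finite V \<and>
     (\<forall>W. finite W \<and> card W = card V \<longrightarrow> S_AP k W \<le> S_AP k V)"

definition set_less :: "real set \<Rightarrow> real set \<Rightarrow> bool" where
  "set_less A B \<longleftrightarrow> (\<forall>a\<in>A. \<forall>b\<in>B. a < b)"

definition orderly_decomp :: "nat \<Rightarrow> (nat \<Rightarrow> real set) \<Rightarrow> real set \<Rightarrow> bool" where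
  "orderly_decomp l Vs X \<longleftrightarrow>
     (\<forall>i\<in>{1..l}. \<forall>j\<in>{1..l}. i \<noteq> j \<longrightarrow> Vs i \<inter> Vs j = {}) \<and>
     (\<Union>i\<in>{1..l}. Vs i) = X \<and>
     (\<forall>i\<in>{1..l}. \<forall>j\<in>{1..l}. i < j \<longrightarrow> set_less (Vs i) (Vs j))"

definition balanced_decomp :: "nat \<Rightarrow> (nat \<Rightarrow> real set) \<Rightarrow> real set \<Rightarrow> bool" where
  "balanced_decomp l Vs X \<longleftrightarrow>
     (\<forall>i\<in>{1..l}. card (Vs i) = card X div l \<or> card (Vs i) = (card X + l - 1) div l)"

end

theory Submission
  imports Defs
begin


definition PS :: "nat \<Rightarrow> real set \<Rightarrow> (real \<times> real) set" where
  "PS k V = {(a,d). d > 0 \<and> arith_prog k a d \<subseteq> V}"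

lemma ap_mem: "i < k \<Longrightarrow> a + real i * d \<in> arith_prog k a d"
  by (auto simp: arith_prog_def)

lemma ap_memE: "x \<in> arith_prog k a d \<Longrightarrow> (\<And>i. i < k \<Longrightarrow> x = a + real i * d \<Longrightarrow> P) \<Longrightarrow> P"
  by (auto simp: arith_prog_def)

lemma ap_ge: "x \<in> arith_prog k a d \<Longrightarrow> d > 0 \<Longrightarrow> a \<le> x"
  by (erule ap_memE) auto

lemma ap_inj:
  assumes "2 \<le> k" "d > 0" "d' > 0" "arith_prog k a d = arith_prog k a' d'"
  shows "a = a' \<and> d = d'"
proof -
  have "a \<in> arith_prog k a' d'" using ap_mem[of 0 k a d] assms by simp
  hence 1: "a' \<le> a" using ap_ge assms by blast
  have "a' \<in> arith_prog k a d" using ap_mem[of 0 k a' d'] assms by simp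
  hence "a \<le> a'" using ap_ge assms by blast
  with 1 have aa: "a = a'" by simp
  have "a + d \<in> arith_prog k a' d'" using ap_mem[of 1 k a d] assms by simp
  then obtain j where "a + d = a' + real j * d'" by (rule ap_memE)
  hence j: "a + d = a + real j * d'" using aa by simp
  have "j \<noteq> 0" proof assume "j = 0" with j assms show False by simp qed
  hence "real j \<ge> 1" by simp
  hence "1 * d' \<le> real j * d'" using assms by (intro mult_right_mono) auto
  hence "d' \<le> d" using j by simp
  have "a' + d' \<in> arith_prog k a d" using ap_mem[of 1 k a' d'] assms by simp
  then obtain i where "a' + d' = a + real i * d" by (rule ap_memE)
  hence i: "a + d' = a + real i * d" using aa by simp
  have "i \<noteq> 0" proof assume "i = 0" with i assms show False by simp qed
  hence "real i \<ge> 1" by simp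
  hence "1 * d \<le> real i * d" using assms by (intro mult_right_mono) auto
  hence "d \<le> d'" using i by simp
  with \<open>d' \<le> d\<close> aa show ?thesis by simp
qed

lemma S_AP_PS: assumes "2 \<le> k" shows "S_AP k V = card (PS k V)"
proof -
  have e: "{P. \<exists>a d. d > 0 \<and> P = arith_prog k a d \<and> P \<subseteq> V} = (\<lambda>(a,d). arith_prog k a d) ` PS k V"
    by (auto simp: PS_def image_def)
  have "inj_on (\<lambda>(a,d). arith_prog k a d) (PS k V)"
    using ap_inj[OF assms] by (auto simp: inj_on_def PS_def)
  thus ?thesis unfolding S_AP_def e by (simp add: card_image)
qed

lemma PS_finite: assumes "finite V" "2 \<le> k" shows "finite (PS k V)"
proof -
  have "PS k V \<subseteq> (\<lambda>(x,y). (x, y - x)) ` (V \<times> V)"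
  proof
    fix p assume "p \<in> PS k V"
    then obtain a d where p: "p = (a,d)" "d > 0" "arith_prog k a d \<subseteq> V" by (auto simp: PS_def)
    have "a \<in> V" using p ap_mem[of 0 k a d] assms by auto
    moreover have "a + d \<in> V" using p ap_mem[of 1 k a d] assms by auto
    ultimately show "p \<in> (\<lambda>(x,y). (x, y - x)) ` (V \<times> V)"
      using p by (auto simp: image_def intro!: bexI[of _ "a+d"])
  qed
  thus ?thesis using assms by (meson finite_SigmaI finite_imageI finite_subset)
qed



lemma two_eq: "(y::real) < z \<Longrightarrow> y' < z' \<Longrightarrow> {y,z} = {y',z'} \<Longrightarrow> y = y' \<and> z = z'"
  by (auto simp: doubleton_eq_iff)

lemma card_two_sub: "finite U \<Longrightarrow> inj_on f B \<Longrightarrow> f ` B \<subseteq> {S. S \<subseteq> U \<and> card S = 2} \<Longrightarrow> card B \<le> card U choose 2"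
  using card_inj_on_le[of f B "{S. S \<subseteq> U \<and> card S = 2}"] n_subsets[of U 2] by simp

lemma key_up:
  assumes k: "2 \<le> k" and fin: "finite V" and VU: "V = W \<union> U" and sl: "set_less W U"
    and fw: "finite (PS (k-1) W)"
  shows "card (PS k V) \<le> card (PS (k-1) W) + (card U choose 2)"
proof -
  define A where "A = {p \<in> PS k V. fst p + real (k-2) * snd p \<notin> U}"
  define B where "B = {p \<in> PS k V. fst p + real (k-2) * snd p \<in> U}"
  have fU: "finite U" using fin VU by simp
  have rk: "real (k-1) = real (k-2) + 1" using k by (simp add: of_nat_diff)
  have "PS k V = A \<union> B" by (auto simp: A_def B_def)
  hence c1: "card (PS k V) \<le> card A + card B" by (simp add: card_Un_le)
  have "A \<subseteq> PS (k-1) W"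
  proof
    fix p assume "p \<in> A"
    then obtain a d where p: "p = (a,d)" "d > 0" "arith_prog k a d \<subseteq> V"
      and nu: "a + real (k-2) * d \<notin> U" by (auto simp: A_def PS_def)
    have yV: "a + real (k-2) * d \<in> V" using p ap_mem[of "k-2" k a d] k by auto
    hence yW: "a + real (k-2) * d \<in> W" using nu VU by auto
    have "arith_prog (k-1) a d \<subseteq> W"
    proof
      fix x assume "x \<in> arith_prog (k-1) a d"
      then obtain i where i: "i < k-1" "x = a + real i * d" by (rule ap_memE)
      have "x \<in> V" using p ap_mem[of i k a d] i by auto
      moreover have "x \<notin> U"
      proof
        assume "x \<in> U"
        hence "a + real (k-2) * d < x" using sl yW by (auto simp: set_less_def)
        moreover have "real i * d \<le> real (k-2) * d" using i p by (intro mult_right_mono) auto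
        ultimately show False using i by simp
      qed
      ultimately show "x \<in> W" using VU by auto
    qed
    thus "p \<in> PS (k-1) W" using p by (auto simp: PS_def)
  qed
  hence c2: "card A \<le> card (PS (k-1) W)" using fw by (simp add: card_mono)
  define f where "f = (\<lambda>(a::real,d::real). {a + real (k-2) * d, a + real (k-1) * d})"
  have "inj_on f B"
  proof (rule inj_onI)
    fix p q assume "p \<in> B" "q \<in> B" "f p = f q"
    then obtain a d a' d' where pq: "p = (a,d)" "q = (a',d')" "d > 0" "d' > 0"
      and e: "{a + real (k-2) * d, a + real (k-1) * d} = {a' + real (k-2) * d', a' + real (k-1) * d'}"
      by (auto simp: B_def PS_def f_def)
    have e12: "a + real (k-2) * d = a' + real (k-2) * d' \<and> a + real (k-1) * d = a' + real (k-1) * d'"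
      using two_eq[OF _ _ e] pq rk by (simp add: algebra_simps)
    have "(a + real(k-1)*d) - (a + real(k-2)*d) = d" "(a' + real(k-1)*d') - (a' + real(k-2)*d') = d'"
      using rk by (simp_all add: algebra_simps)
    hence "d = d'" using e12 by linarith
    moreover hence "a = a'" using e12 by simp
    ultimately show "p = q" using pq by simp
  qed
  moreover have "f ` B \<subseteq> {S. S \<subseteq> U \<and> card S = 2}"
  proof
    fix S assume "S \<in> f ` B"
    then obtain a d where p: "(a,d) \<in> B" "S = f (a,d)" by auto
    hence d: "d > 0" "arith_prog k a d \<subseteq> V" and yU: "a + real (k-2) * d \<in> U"
      by (auto simp: B_def PS_def)
    have zV: "a + real (k-1) * d \<in> V" using d ap_mem[of "k-1" k a d] k by auto
    have zy: "a + real (k-1) * d = a + real (k-2) * d + d" using rk by (simp add: algebra_simps)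
    have "a + real (k-1) * d \<notin> W"
    proof
      assume "a + real (k-1) * d \<in> W"
      hence "a + real (k-1) * d < a + real (k-2) * d" using sl yU unfolding set_less_def by blast
      thus False using zy d by simp
    qed
    hence zU: "a + real (k-1) * d \<in> U" using zV VU by auto
    have ne: "a + real (k-2) * d \<noteq> a + real (k-1) * d" using zy d by linarith
    have Se: "S = {a + real (k-2) * d, a + real (k-1) * d}" using p(2) unfolding f_def by simp
    have "S \<subseteq> U" using Se yU zU by blast
    moreover have "card S = 2" using Se ne card_2_iff by blast
    ultimately show "S \<in> {S. S \<subseteq> U \<and> card S = 2}" by simp
  qed
  ultimately have c3: "card B \<le> card U choose 2" using card_two_sub fU by blast
  show ?thesis using c1 c2 c3 by simp
qed

lemma key_down:
  assumes k: "2 \<le> k" and fin: "finite V" and VU: "V = U \<union> W" and sl: "set_less U W"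
    and fw: "finite (PS (k-1) W)"
  shows "card (PS k V) \<le> card (PS (k-1) W) + (card U choose 2)"
proof -
  define A where "A = {p \<in> PS k V. fst p + snd p \<notin> U}"
  define B where "B = {p \<in> PS k V. fst p + snd p \<in> U}"
  have fU: "finite U" using fin VU by simp
  have "PS k V = A \<union> B" by (auto simp: A_def B_def)
  hence c1: "card (PS k V) \<le> card A + card B" by (simp add: card_Un_le)
  define g where "g = (\<lambda>(a::real,d::real). (a+d, d))"
  have "inj_on g A" by (auto simp: inj_on_def g_def)
  moreover have "g ` A \<subseteq> PS (k-1) W"
  proof
    fix q assume "q \<in> g ` A"
    then obtain a d where p: "q = (a+d,d)" "d > 0" "arith_prog k a d \<subseteq> V"
      and nu: "a + d \<notin> U" by (auto simp: A_def PS_def g_def)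
    have yV: "a + d \<in> V" using p ap_mem[of 1 k a d] k by auto
    hence yW: "a + d \<in> W" using nu VU by auto
    have "arith_prog (k-1) (a+d) d \<subseteq> W"
    proof
      fix x assume "x \<in> arith_prog (k-1) (a+d) d"
      then obtain i where i: "i < k-1" "x = a + d + real i * d" by (rule ap_memE)
      have "x = a + real (Suc i) * d" using i by (simp add: algebra_simps)
      moreover have "a + real (Suc i) * d \<in> V" using p(3) ap_mem[of "Suc i" k a d] i by auto
      ultimately have "x \<in> V" by simp
      moreover have "x \<notin> U"
      proof
        assume "x \<in> U"
        hence "x < a + d" using sl yW by (auto simp: set_less_def)
        moreover have "real i * d \<ge> 0" using p by simp
        ultimately show False using i by simp
      qed
      ultimately show "x \<in> W" using VU by auto
    qed
    thus "q \<in> PS (k-1) W" using p by (auto simp: PS_def)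
  qed
  ultimately have c2: "card A \<le> card (PS (k-1) W)" using fw card_inj_on_le by blast
  define f where "f = (\<lambda>(a::real,d::real). {a, a + d})"
  have "inj_on f B"
  proof (rule inj_onI)
    fix p q assume "p \<in> B" "q \<in> B" "f p = f q"
    then obtain a d a' d' where pq: "p = (a,d)" "q = (a',d')" "d > 0" "d' > 0"
      and e: "{a, a + d} = {a', a' + d'}"
      by (auto simp: B_def PS_def f_def)
    have "a = a' \<and> a + d = a' + d'" using two_eq[OF _ _ e] pq by simp
    thus "p = q" using pq by simp
  qed
  moreover have "f ` B \<subseteq> {S. S \<subseteq> U \<and> card S = 2}"
  proof
    fix S assume "S \<in> f ` B"
    then obtain a d where p: "(a,d) \<in> B" "S = f (a,d)" by auto
    hence d: "d > 0" "arith_prog k a d \<subseteq> V" and yU: "a + d \<in> U"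
      by (auto simp: B_def PS_def)
    have zV: "a \<in> V" using d ap_mem[of 0 k a d] k by auto
    have "a \<notin> W"
    proof
      assume "a \<in> W"
      hence "a + d < a" using sl yU unfolding set_less_def by blast
      thus False using d by simp
    qed
    hence "a \<in> U" using zV VU by auto
    thus "S \<in> {S. S \<subseteq> U \<and> card S = 2}" using p yU d by (auto simp: f_def)
  qed
  ultimately have c3: "card B \<le> card U choose 2" using card_two_sub fU by blast
  show ?thesis using c1 c2 c3 by simp
qed



definition F :: "nat \<Rightarrow> nat \<Rightarrow> nat" where "F l m = (\<Sum>j<m. j div l)"

lemma F_Suc: "F l (Suc m) = F l m + m div l" by (simp add: F_def)

lemma F_closed: assumes "l \<ge> 1"
  shows "2 * F l m + l * (m div l) = l*(m div l)*(m div l) + 2*(m div l)*(m mod l)"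
proof (induction m)
  case 0 thus ?case by (simp add: F_def)
next
  case (Suc m)
  define q where "q = m div l"
  define r where "r = m mod l"
  have rl: "r < l" using assms by (simp add: r_def)
  show ?case
  proof (cases "Suc r < l")
    case True
    have "Suc m div l = q" "Suc m mod l = Suc r" using True assms
      by (auto simp: q_def r_def div_Suc mod_Suc)
    thus ?thesis using Suc unfolding F_Suc q_def[symmetric] r_def[symmetric]
      by (simp add: algebra_simps)
  next
    case False
    hence rr: "Suc r = l" using rl by simp
    have "Suc m div l = Suc q" "Suc m mod l = 0" using rr assms
      by (auto simp: q_def r_def div_Suc mod_Suc)
    have IH: "2 * F (Suc r) m + Suc r * q = Suc r*q*q + 2*q*r"
      using Suc.IH rr unfolding q_def[symmetric] r_def[symmetric] by simp
    have mq: "m div Suc r = q" using q_def rr by simp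
    show ?thesis using IH \<open>Suc m div l = Suc q\<close> \<open>Suc m mod l = 0\<close>
      unfolding F_Suc rr[symmetric] mq by (simp add: algebra_simps)
  qed
qed

lemma F_one: "F 1 m = m choose 2"
  by (induction m) (auto simp: F_def numeral_2_eq_2)

lemma divmod_eq: "(r::nat) < n \<Longrightarrow> (q*n + r) div n = q \<and> (q*n + r) mod n = r"
  by simp

lemma F_ident:
  assumes l: "l \<ge> 2" and t: "t = m div l \<or> t = (m + l - 1) div l"
  shows "F l m = F (l-1) (m - t) + (t choose 2)"
proof -
  obtain L where lL: "l = Suc L" and L1: "L \<ge> 1" using l by (cases l) auto
  define q where "q = m div l"
  define r where "r = m mod l"
  have m: "m = q * Suc L + r" using lL div_mult_mod_eq[of m l] by (simp add: q_def r_def)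
  have rl: "r < Suc L" using lL by (simp add: r_def)
  have cl: "2 * F l m + Suc L * q = Suc L*q*q + 2*q*r"
    using F_closed[of l m] lL by (simp add: q_def r_def)
  have ct: "2 * (t choose 2) + t = t * t"
    using F_closed[of 1 t] F_one[of t] by simp
  have tc: "t = q \<or> (r \<ge> 1 \<and> t = Suc q)"
  proof -
    have "(m + l - 1) div l = (if r = 0 then q else Suc q)"
    proof (cases "r = 0")
      case True
      hence "m + l - 1 = q * Suc L + L" using m lL by simp
      thus ?thesis using True divmod_eq[of L "Suc L" q] lL by simp
    next
      case False
      hence e: "m + l - 1 = Suc q * Suc L + (r - 1)" using m lL by simp
      have "r - 1 < Suc L" using rl by simp
      hence d: "(Suc q * Suc L + (r - 1)) div Suc L = Suc q" using divmod_eq by blast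
      have "(m + l - 1) div l = Suc q" by (metis d e lL)
      thus ?thesis using False by simp
    qed
    thus ?thesis using t q_def by (auto split: if_splits)
  qed
  show ?thesis
  proof (cases "t = q")
    case True
    show ?thesis
    proof (cases "r < L")
      case True
      have mt: "m - t = q * L + r" using m \<open>t = q\<close> by simp
      have "2 * F L (m - t) + L * q = L*q*q + 2*q*r"
        using F_closed[of L "m-t"] L1 divmod_eq[OF True, of q] mt by simp
      thus ?thesis using cl ct \<open>t = q\<close> lL by (simp add: algebra_simps)
    next
      case False
      hence rL: "r = L" using rl by simp
      have mt: "m - t = Suc q * L + 0" using m \<open>t = q\<close> rL by simp
      have "2 * F L (m - t) + L * Suc q = L*Suc q*Suc q"
        using F_closed[of L "m-t"] L1 divmod_eq[of 0 L "Suc q"] mt by simp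
      thus ?thesis using cl ct \<open>t = q\<close> lL rL by (simp add: algebra_simps)
    qed
  next
    case False
    hence r1: "r \<ge> 1" and tq: "t = Suc q" using tc by auto
    have mt: "m - t = q * L + (r - 1)" using m tq r1 by simp
    have "r - 1 < L" using rl r1 by simp
    hence "2 * F L (m - t) + L * q = L*q*q + 2*q*(r-1)"
      using F_closed[of L "m-t"] L1 divmod_eq[of "r-1" L q] mt by simp
    moreover obtain r' where r': "r = Suc r'" using r1 by (cases r) auto
    ultimately have "2 * F L (m - t) + L * q = L*q*q + 2*q*r'" by simp
    thus ?thesis using cl ct tq lL r' by (simp add: algebra_simps)
  qed
qed



lemma split_sorted:
  assumes "finite V" "t \<le> card V"
  shows "\<exists>W U. V = W \<union> U \<and> set_less W U \<and> card U = t \<and> card W = card V - t"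
proof -
  define xs where "xs = sorted_list_of_set V"
  define n where "n = card V - t"
  have sx: "sorted_wrt (<) xs" using assms(1) by (simp add: xs_def)
  have dx: "distinct xs" using assms(1) by (simp add: xs_def)
  have setx: "set xs = V" using assms(1) by (simp add: xs_def)
  have lx: "length xs = card V" using assms(1) by (simp add: xs_def)
  have "sorted_wrt (<) (take n xs @ drop n xs)" using sx by (simp only: append_take_drop_id)
  hence "sorted_wrt (<) (take n xs) \<and> sorted_wrt (<) (drop n xs) \<and> (\<forall>x\<in>set (take n xs). \<forall>y\<in>set (drop n xs). x < y)" by (rule iffD1[OF sorted_wrt_append])
  hence "\<forall>x\<in>set (take n xs). \<forall>y\<in>set (drop n xs). x < y" by (rule conjunct2[THEN conjunct2])
  hence sl: "set_less (set (take n xs)) (set (drop n xs))" unfolding set_less_def .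
  have c1: "card (set (take n xs)) = n"
    using distinct_card[OF distinct_take[OF dx]] lx n_def by simp
  have c2: "card (set (drop n xs)) = t"
    using distinct_card[OF distinct_drop[OF dx]] lx n_def assms(2) by simp
  have "set xs = set (take n xs @ drop n xs)" by (simp only: append_take_drop_id)
  hence e: "V = set (take n xs) \<union> set (drop n xs)" using setx by (simp only: set_append)
  have c1': "card (set (take n xs)) = card V - t" using c1 n_def by simp
  show ?thesis
    by (rule exI[of _ "set (take n xs)"], rule exI[of _ "set (drop n xs)"]) (intro conjI e sl c1' c2)
qed


lemma PS_one_empty: "PS (Suc 0) {} = {}"
  by (auto simp: PS_def arith_prog_def)

lemma upper: "2 \<le> k \<Longrightarrow> finite V \<Longrightarrow> card (PS k V) \<le> F (k-1) (card V)"
proof (induction k arbitrary: V rule: nat_induct_at_least)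
  case base
  have "card (PS 2 V) \<le> card (PS (2-1) {}) + (card V choose 2)"
    using key_up[of 2 V "{}" V] base by (simp add: PS_one_empty set_less_def)
  thus ?case using F_one by (simp add: PS_one_empty)
next
  case (Suc k)
  define t where "t = card V div k"
  have "t \<le> card V" by (simp add: t_def)
  then obtain W U where s: "V = W \<union> U" "set_less W U" "card U = t" "card W = card V - t"
    using split_sorted[OF Suc.prems] by blast
  have fW: "finite W" using s(1) Suc.prems by simp
  have k2: "2 \<le> Suc k" using Suc.hyps by simp
  have fP: "finite (PS (Suc k - 1) W)" using PS_finite[OF fW Suc.hyps] by simp
  have 1: "card (PS (Suc k) V) \<le> card (PS (Suc k - 1) W) + (card U choose 2)"
    by (rule key_up[OF k2 Suc.prems s(1) s(2) fP])
  have 2: "card (PS k W) \<le> F (k-1) (card W)" by (rule Suc.IH[OF fW])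
  have 3: "F k (card V) = F (k-1) (card V - t) + (t choose 2)"
    by (rule F_ident) (use Suc.hyps t_def in auto)
  have sk: "Suc k - 1 = k" by simp
  have h1: "card (PS (Suc k) V) \<le> card (PS k W) + (t choose 2)" using 1 unfolding sk s(3) .
  have h2: "card (PS k W) \<le> F (k-1) (card V - t)" using 2 unfolding s(4) .
  show ?case unfolding sk 3 using h1 h2 by linarith
qed

lemma constr: assumes k: "2 \<le> k" shows "F (k-1) m \<le> card (PS k (real ` {0..<m}))"
proof (induction m)
  case 0 thus ?case by (simp add: F_def)
next
  case (Suc m)
  define l where "l = k - 1"
  have l1: "l \<ge> 1" using k by (simp add: l_def)
  have kl: "k = Suc l" using k by (simp add: l_def)
  define N where "N = (\<lambda>d::nat. (real m - real l * real d, real d)) ` {1..m div l}"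
  have inj: "inj_on (\<lambda>d::nat. (real m - real l * real d, real d)) {1..m div l}"
    by (rule inj_onI) simp
  have cN: "card N = m div l" unfolding N_def using card_image[OF inj] by simp
  have NPS: "N \<subseteq> PS k (real ` {0..<Suc m})"
  proof
    fix p assume "p \<in> N"
    then obtain d where d: "d \<in> {1..m div l}" "p = (real m - real l * real d, real d)"
      unfolding N_def by blast
    have "l * d \<le> l * (m div l)" using d by simp
    also have "\<dots> \<le> m" by (simp add: times_div_less_eq_dividend)
    finally have ld: "l * d \<le> m" .
    have "arith_prog k (real m - real l * real d) (real d) \<subseteq> real ` {0..<Suc m}"
    proof
      fix x assume "x \<in> arith_prog k (real m - real l * real d) (real d)"
      then obtain i where i: "i < k" "x = real m - real l * real d + real i * real d" by (rule ap_memE)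
      have il: "i \<le> l" using i kl by simp
      have "(l - i) * d \<le> l * d" by (simp add: mult_le_mono1)
      hence ld2: "(l - i) * d \<le> m" using ld by linarith
      have "real (m - (l - i) * d) = real m - real ((l - i) * d)" using ld2 by (rule of_nat_diff)
      also have "real ((l - i) * d) = (real l - real i) * real d" using il by (simp add: of_nat_diff)
      finally have "x = real (m - (l - i) * d)" using i(2) by (simp add: algebra_simps)
      moreover have "m - (l - i) * d \<in> {0..<Suc m}" by simp
      ultimately show "x \<in> real ` {0..<Suc m}" by blast
    qed
    moreover have "real d > 0" using d by simp
    ultimately show "p \<in> PS k (real ` {0..<Suc m})" using d(2) unfolding PS_def by blast
  qed
  have sub0: "real ` {0..<m} \<subseteq> real ` {0..<Suc m}" by auto
  have PSsub: "PS k (real ` {0..<m}) \<subseteq> PS k (real ` {0..<Suc m})"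
    unfolding PS_def using sub0 by blast
  have disj: "PS k (real ` {0..<m}) \<inter> N = {}"
  proof (rule ccontr)
    assume "PS k (real ` {0..<m}) \<inter> N \<noteq> {}"
    then obtain p where p: "p \<in> PS k (real ` {0..<m})" "p \<in> N" by blast
    then obtain d where pd: "p = (real m - real l * real d, real d)" unfolding N_def by blast
    have ss: "arith_prog k (real m - real l * real d) (real d) \<subseteq> real ` {0..<m}"
      using p(1) unfolding pd PS_def by blast
    have "real m - real l * real d + real l * real d \<in> arith_prog k (real m - real l * real d) (real d)"
      using ap_mem[of l k "real m - real l * real d" "real d"] kl by blast
    hence "real m \<in> arith_prog k (real m - real l * real d) (real d)" by simp
    hence "real m \<in> real ` {0..<m}" using ss by blast
    thus False by auto
  qed
  have fin: "finite (PS k (real ` {0..<Suc m}))" using PS_finite k by simp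
  have fN: "finite N" by (simp add: N_def)
  have f0: "finite (PS k (real ` {0..<m}))" using finite_subset[OF PSsub fin] .
  have "card (PS k (real ` {0..<m})) + card N = card (PS k (real ` {0..<m}) \<union> N)"
    using disj fN f0 by (simp add: card_Un_disjoint)
  also have "\<dots> \<le> card (PS k (real ` {0..<Suc m}))"
    using NPS PSsub fin by (intro card_mono) auto
  finally have A: "card (PS k (real ` {0..<m})) + m div l \<le> card (PS k (real ` {0..<Suc m}))"
    using cN by simp
  have B: "F (k-1) (Suc m) = F (k-1) m + m div l" by (simp add: F_Suc l_def)
  show ?case using A B Suc.IH by linarith
qed



lemma opt_part:
  assumes k: "3 \<le> k" and fV: "finite V" and lo: "F (k-1) (card V) \<le> card (PS k V)"
    and up: "card (PS k V) \<le> card (PS (k-1) W) + (card U choose 2)"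
    and fW: "finite W" and cW: "card W = card V - card U"
    and cU: "card U = card V div (k-1) \<or> card U = (card V + (k-1) - 1) div (k-1)"
  shows "optimal_AP (k-1) W"
proof -
  have id: "F (k-1) (card V) = F (k-1-1) (card V - card U) + (card U choose 2)"
    by (rule F_ident) (use k cU in auto)
  have low: "F (k-1-1) (card W) \<le> card (PS (k-1) W)" using id lo up unfolding cW by linarith
  have k2: "2 \<le> k - 1" using k by simp
  show ?thesis unfolding optimal_AP_def
  proof (intro conjI allI impI)
    show "finite W" by (rule fW)
  next
    fix W' :: "real set" assume W': "finite W' \<and> card W' = card W"
    have "card (PS (k-1) W') \<le> F (k-1-1) (card W')" using upper[OF k2] W' by blast
    hence "card (PS (k-1) W') \<le> card (PS (k-1) W)" using low W' by simp
    thus "S_AP (k-1) W' \<le> S_AP (k-1) W" using S_AP_PS[OF k2] by simp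
  qed
qed

theorem mainTheorem10:
  fixes k :: nat and V :: "real set" and Vs :: "nat \<Rightarrow> real set"
  assumes "k \<ge> 3"
    and "finite V"
    and "optimal_AP k V"
    and "orderly_decomp (k - 1) Vs V"
    and "balanced_decomp (k - 1) Vs V"
  shows "optimal_AP (k - 1) (\<Union>j\<in>{1..k-2}. Vs j)
       \<and> optimal_AP (k - 1) (\<Union>j\<in>{2..k-1}. Vs j)"
proof -
  have k: "3 \<le> k" and fV: "finite V" using assms by auto
  have k2: "2 \<le> k" using k by simp
  define I where "I = real ` {0..<card V}"
  have cI: "card I = card V" unfolding I_def by (simp add: card_image)
  have "S_AP k I \<le> S_AP k V" using assms(3) cI unfolding optimal_AP_def I_def by auto
  hence lo: "F (k-1) (card V) \<le> card (PS k V)"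
    using constr[OF k2, of "card V"] S_AP_PS[OF k2] unfolding I_def by simp
  have D1: "\<And>i j. i \<in> {1..k-1} \<Longrightarrow> j \<in> {1..k-1} \<Longrightarrow> i \<noteq> j \<Longrightarrow> Vs i \<inter> Vs j = {}"
    and D2: "(\<Union>i\<in>{1..k-1}. Vs i) = V"
    and D3: "\<And>i j. i \<in> {1..k-1} \<Longrightarrow> j \<in> {1..k-1} \<Longrightarrow> i < j \<Longrightarrow> set_less (Vs i) (Vs j)"
    using assms(4) unfolding orderly_decomp_def by blast+
  have bal: "\<And>i. i \<in> {1..k-1} \<Longrightarrow> card (Vs i) = card V div (k-1) \<or> card (Vs i) = (card V + (k-1) - 1) div (k-1)"
    using assms(5) unfolding balanced_decomp_def by blast
  have fin_sub: "\<And>X. X \<subseteq> V \<Longrightarrow> finite X" using fV finite_subset by blast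
  define W1 where "W1 = (\<Union>j\<in>{1..k-2}. Vs j)"
  define W2 where "W2 = (\<Union>j\<in>{2..k-1}. Vs j)"
  have i1: "{1..k-1} = {1..k-2} \<union> {k-1}" using k by auto
  have i2: "{1..k-1} = {1} \<union> {2..k-1}" using k by auto
  have V1: "V = W1 \<union> Vs (k-1)" using D2 i1 unfolding W1_def by auto
  have V2: "V = Vs 1 \<union> W2" using D2 i2 unfolding W2_def by auto
  have sl1: "set_less W1 (Vs (k-1))" unfolding W1_def set_less_def
  proof (intro ballI)
    fix a b assume "a \<in> (\<Union>j\<in>{1..k-2}. Vs j)" "b \<in> Vs (k-1)"
    then obtain j where "j \<in> {1..k-2}" "a \<in> Vs j" by blast
    moreover have "set_less (Vs j) (Vs (k-1))" if "j \<in> {1..k-2}" using D3[of j "k-1"] that k by auto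
    ultimately show "a < b" using \<open>b \<in> Vs (k-1)\<close> unfolding set_less_def by blast
  qed
  have sl2: "set_less (Vs 1) W2" unfolding W2_def set_less_def
  proof (intro ballI)
    fix a b assume "a \<in> Vs 1" "b \<in> (\<Union>j\<in>{2..k-1}. Vs j)"
    then obtain j where "j \<in> {2..k-1}" "b \<in> Vs j" by blast
    moreover have "set_less (Vs 1) (Vs j)" if "j \<in> {2..k-1}" using D3[of 1 j] that k by auto
    ultimately show "a < b" using \<open>a \<in> Vs 1\<close> unfolding set_less_def by blast
  qed
  have dj1: "W1 \<inter> Vs (k-1) = {}"
  proof (rule ccontr)
    assume "W1 \<inter> Vs (k-1) \<noteq> {}"
    then obtain x j where "j \<in> {1..k-2}" "x \<in> Vs j" "x \<in> Vs (k-1)" unfolding W1_def by blast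
    moreover have "Vs j \<inter> Vs (k-1) = {}" 
    proof (rule D1)
      show "j \<in> {1..k-1}" "k - 1 \<in> {1..k-1}" "j \<noteq> k - 1" using \<open>j \<in> {1..k-2}\<close> k by auto
    qed
    ultimately show False by blast
  qed
  have dj2: "Vs 1 \<inter> W2 = {}"
  proof (rule ccontr)
    assume "Vs 1 \<inter> W2 \<noteq> {}"
    then obtain x j where "j \<in> {2..k-1}" "x \<in> Vs j" "x \<in> Vs 1" unfolding W2_def by blast
    moreover have "Vs 1 \<inter> Vs j = {}" 
    proof (rule D1)
      show "j \<in> {1..k-1}" "1 \<in> {1..k-1}" "1 \<noteq> j" using \<open>j \<in> {2..k-1}\<close> k by auto
    qed
    ultimately show False by blast
  qed
  have fW1: "finite W1" and fU1: "finite (Vs (k-1))" using fin_sub V1 by auto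
  have fW2: "finite W2" and fU2: "finite (Vs 1)" using fin_sub V2 by auto
  have cW1: "card W1 = card V - card (Vs (k-1))"
    using card_Un_disjoint[OF fW1 fU1 dj1] V1 by simp
  have cW2: "card W2 = card V - card (Vs 1)"
    using card_Un_disjoint[OF fU2 fW2 dj2] V2 by simp
  have fP1: "finite (PS (k-1) W1)" using PS_finite[OF fW1] k by simp
  have fP2: "finite (PS (k-1) W2)" using PS_finite[OF fW2] k by simp
  have up1: "card (PS k V) \<le> card (PS (k-1) W1) + (card (Vs (k-1)) choose 2)"
    by (rule key_up[OF k2 fV V1 sl1 fP1])
  have up2: "card (PS k V) \<le> card (PS (k-1) W2) + (card (Vs 1) choose 2)"
    by (rule key_down[OF k2 fV V2 sl2 fP2])
  have b1: "card (Vs (k-1)) = card V div (k-1) \<or> card (Vs (k-1)) = (card V + (k-1) - 1) div (k-1)"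
    using bal[of "k-1"] k by simp
  have b2: "card (Vs 1) = card V div (k-1) \<or> card (Vs 1) = (card V + (k-1) - 1) div (k-1)"
    using bal[of 1] k by simp
  have "optimal_AP (k-1) W1" by (rule opt_part[OF k fV lo up1 fW1 cW1 b1])
  moreover have "optimal_AP (k-1) W2" by (rule opt_part[OF k fV lo up2 fW2 cW2 b2])
  ultimately show ?thesis unfolding W1_def W2_def by simp
qed


end
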